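(* Let $K_f, M, B, P_m, P_f, k_{22}>0$, $b_{22}>0$, $I_m, I_f\ge 0$, $B_f\ge 0$ and $0\le\alpha\le 1$ be real numbers, and put $\mu=I_m/P_m$, $\nu=I_f/P_f$. Consider the two-port with hybrid matrix $H(s)=\begin{bmatrix} h_{11}&h_{12}\\ h_{21}&h_{22}\end{bmatrix}$ where $$h_{11}(s)=\frac{B_fMs^4+\big(B_f(B+P_m)+K_fM\big)s^3+\big(B_fI_m+K_f(B+P_m)\big)s^2+K_fI_ms}{a_4s^4+a_3s^3+a_2s^2+a_1s+a_0},$$ $$h_{12}(s)=\frac{B_fP_mP_fs^3+P_mP_f\big(K_f+B_f(\mu+\nu)\big)s^2+\big(B_fI_mI_f+K_fP_mP_f(\mu+\nu)\big)s+K_fI_mI_f}{a_4s^4+a_3s^3+a_2s^2+a_1s+a_0},$$ $h_{21}(s)=-1$, $h_{22}(s)=\dfrac{s}{b_{22}s+k_{22}}$, with $a_4=M$, $a_3=B+P_m+B_f(\alpha+P_mP_f)$, $a_2=I_m+K_f(\alpha+P_mP_f)+B_fP_mP_f(\mu+\nu)$, $a_1=B_fI_mI_f+K_fP_mP_f(\mu+\nu)$, $a_0=K_fI_mI_f$. Suppose that: the $h$-parameters have no poles in the open right half plane; any poles of the $h$-parameters on the imaginary axis are simple with real positive residues; and $\mathrm{Re}\,h_{11}(j\omega)\ge 0$ for all real $\omega$. If this two-port is absolutely stable, then $B_f>0$.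
   Context: This models a series (damped) elastic actuator (actuator inertia $M$, actuator damping $B$, physical spring $K_f$ in parallel with physical damper $B_f$; $B_f=0$ is a pure series elastic actuator) under velocity-sourced impedance control with PI motion controller gains $P_m,I_m$, PI force controller gains $P_f,I_f$, feed-forward parameter $\alpha$, and a virtual coupler consisting of a spring $k_{22}$ in parallel with a damper $b_{22}$. The hybrid matrix relates $(F_{\mathrm{int}},v_e)^T=H\,(-v_h,F_e)^T$. A two-port with hybrid matrix $H$ is called absolutely stable if (Llewellyn's criterion): (a) the $h$-parameters have no poles in the open right half plane; (b) any poles of the $h$-parameters on the imaginary axis are simple with real positive residues; (c) for all real $\omega$ (away from imaginary-axis poles), (i) $\mathrm{Re}\,h_{11}(j\omega)\ge 0$ and (ii) $2\,\mathrm{Re}\,h_{11}(j\omega)\,\mathrm{Re}\,h_{22}(j\omega)-\mathrm{Re}\big(h_{12}(j\omega)h_{21}(j\omega)\big)-\big|h_{12}(j\omega)h_{21}(j\omega)\big|\ge 0$. *)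

theory Defs
  imports "HOL-Complex_Analysis.Complex_Analysis"
begin

definition no_rhp_poles :: "(complex \<Rightarrow> complex) list \<Rightarrow> bool" where
  "no_rhp_poles hs \<longleftrightarrow> (\<forall>h\<in>set hs. \<forall>z. 0 < Re z \<longrightarrow> \<not> is_pole h z)"

definition imag_poles_simple_pos_res :: "(complex \<Rightarrow> complex) list \<Rightarrow> bool" where
  "imag_poles_simple_pos_res hs \<longleftrightarrow>
     (\<forall>h\<in>set hs. \<forall>z. Re z = 0 \<longrightarrow> is_pole h z \<longrightarrow>
        zorder h z = -1 \<and> Im (residue h z) = 0 \<and> 0 < Re (residue h z))"

definition away_from_imag_poles :: "(complex \<Rightarrow> complex) list \<Rightarrow> real \<Rightarrow> bool" where
  "away_from_imag_poles hs w \<longleftrightarrow> (\<forall>h\<in>set hs. \<not> is_pole h (\<i> * complex_of_real w))"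

definition re_h11_nonneg :: "(complex \<Rightarrow> complex) list \<Rightarrow> (complex \<Rightarrow> complex) \<Rightarrow> bool" where
  "re_h11_nonneg hs h11 \<longleftrightarrow>
     (\<forall>w::real. away_from_imag_poles hs w \<longrightarrow> 0 \<le> Re (h11 (\<i> * complex_of_real w)))"

definition absolutely_stable ::
  "(complex \<Rightarrow> complex) \<Rightarrow> (complex \<Rightarrow> complex) \<Rightarrow> (complex \<Rightarrow> complex) \<Rightarrow> (complex \<Rightarrow> complex) \<Rightarrow> bool" where
  "absolutely_stable h11 h12 h21 h22 \<longleftrightarrow>
     (let hs = [h11, h12, h21, h22] in
       no_rhp_poles hs \<and> imag_poles_simple_pos_res hs \<and>
       (\<forall>w::real. away_from_imag_poles hs w \<longrightarrow>
          (let s = \<i> * complex_of_real w in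
            0 \<le> Re (h11 s) \<and>
            0 \<le> 2 * Re (h11 s) * Re (h22 s) - Re (h12 s * h21 s) - cmod (h12 s * h21 s))))"

text \<open>They are rational functions; remove_sings fills in removable
  singularities so that the functions take their true (continuous) values there.\<close>

definition sea_den ::
  "real \<Rightarrow> real \<Rightarrow> real \<Rightarrow> real \<Rightarrow> real \<Rightarrow> real \<Rightarrow> real \<Rightarrow> real \<Rightarrow> real \<Rightarrow> complex \<Rightarrow> complex" where
  "sea_den Kf M B Bf Pm Iim Pf Iif alpha s =
     (let mu = Iim / Pm; nu = Iif / Pf;
          a4 = M;
          a3 = B + Pm + Bf * (alpha + Pm * Pf);
          a2 = Iim + Kf * (alpha + Pm * Pf) + Bf * Pm * Pf * (mu + nu);
          a1 = Bf * Iim * Iif + Kf * Pm * Pf * (mu + nu);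
          a0 = Kf * Iim * Iif
      in of_real a4 * s^4 + of_real a3 * s^3 + of_real a2 * s^2 + of_real a1 * s + of_real a0)"

definition sea_h11 ::
  "real \<Rightarrow> real \<Rightarrow> real \<Rightarrow> real \<Rightarrow> real \<Rightarrow> real \<Rightarrow> real \<Rightarrow> real \<Rightarrow> real \<Rightarrow> complex \<Rightarrow> complex" where
  "sea_h11 Kf M B Bf Pm Iim Pf Iif alpha = remove_sings (\<lambda>s.
     (of_real (Bf * M) * s^4 + of_real (Bf * (B + Pm) + Kf * M) * s^3
       + of_real (Bf * Iim + Kf * (B + Pm)) * s^2 + of_real (Kf * Iim) * s)
     / sea_den Kf M B Bf Pm Iim Pf Iif alpha s)"

definition sea_h12 ::
  "real \<Rightarrow> real \<Rightarrow> real \<Rightarrow> real \<Rightarrow> real \<Rightarrow> real \<Rightarrow> real \<Rightarrow> real \<Rightarrow> real \<Rightarrow> complex \<Rightarrow> complex" where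
  "sea_h12 Kf M B Bf Pm Iim Pf Iif alpha = remove_sings (\<lambda>s.
     (let mu = Iim / Pm; nu = Iif / Pf in
       (of_real (Bf * Pm * Pf) * s^3 + of_real (Pm * Pf * (Kf + Bf * (mu + nu))) * s^2
         + of_real (Bf * Iim * Iif + Kf * Pm * Pf * (mu + nu)) * s + of_real (Kf * Iim * Iif))
       / sea_den Kf M B Bf Pm Iim Pf Iif alpha s))"

definition sea_h21 :: "complex \<Rightarrow> complex" where
  "sea_h21 = (\<lambda>s. -1)"

definition sea_h22 :: "real \<Rightarrow> real \<Rightarrow> complex \<Rightarrow> complex" where
  "sea_h22 b22 k22 = remove_sings (\<lambda>s. s / (of_real b22 * s + of_real k22))"

end

theory Submission
  imports Defs
begin

lemma den_eq:
  fixes Kf M B Pm Pf Iim Iif alpha w :: real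
  assumes "Pm > 0" "Pf > 0"
  shows "sea_den Kf M B 0 Pm Iim Pf Iif alpha (\<i> * of_real w) =
     Complex (M*w^4-(Iim+Kf*(alpha+Pm*Pf))*w^2+Kf*Iim*Iif) (Kf*(Pf*Iim+Pm*Iif)*w-(B+Pm)*w^3)"
  using assms by (simp add: sea_den_def Let_def complex_eq_iff power_mult_distrib field_simps eval_nat_numeral)

lemma n11_eq:
  fixes Kf M B Pm Pf Iim Iif alpha w :: real
  shows "(of_real (0 * M) * (\<i> * of_real w)^4 + of_real (0 * (B + Pm) + Kf * M) * (\<i> * of_real w)^3
       + of_real (0 * Iim + Kf * (B + Pm)) * (\<i> * of_real w)^2 + of_real (Kf * Iim) * (\<i> * of_real w)) = Complex (-Kf*(B+Pm)*w^2) (Kf*w*(Iim-M*w^2))"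
  by (simp add: complex_eq_iff power_mult_distrib field_simps eval_nat_numeral)

lemma n12_eq:
  fixes Kf M B Pm Pf Iim Iif alpha w :: real
  assumes "Pm > 0" "Pf > 0"
  shows "(of_real (0 * Pm * Pf) * (\<i> * of_real w)^3 + of_real (Pm * Pf * (Kf + 0 * (Iim / Pm + Iif / Pf))) * (\<i> * of_real w)^2
         + of_real (0 * Iim * Iif + Kf * Pm * Pf * (Iim / Pm + Iif / Pf)) * (\<i> * of_real w) + of_real (Kf * Iim * Iif))
      = Complex (Kf*(Iim*Iif-Pm*Pf*w^2)) (Kf*w*(Pm*Iif+Pf*Iim))"
  using assms by (simp add: complex_eq_iff power_mult_distrib field_simps eval_nat_numeral)

lemma ids:
  fixes Kf M B Pm Pf Iim Iif alpha w :: real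
  defines "a3 \<equiv> B+Pm" and "a2 \<equiv> Iim+Kf*(alpha+Pm*Pf)" and "a1 \<equiv> Kf*(Pf*Iim+Pm*Iif)" and "a0 \<equiv> Kf*Iim*Iif"
  defines "p \<equiv> (B+Pm)*a2-M*a1-Iim*a3" and "q \<equiv> Iim*a1-(B+Pm)*a0"
  defines "c4 \<equiv> Pm*Pf*a2+Iim*Iif*M-(Pm*Iif+Pf*Iim)*a3" and "c2 \<equiv> (Pm*Iif+Pf*Iim)*a1-Iim*Iif*a2-Pm*Pf*a0" and "c0 \<equiv> Iim*Iif*a0"
  shows "(-Kf*(B+Pm)*w^2)*(M*w^4-a2*w^2+a0) + (Kf*w*(Iim-M*w^2))*(a1*w-a3*w^3) = Kf*(p*w^4+q*w^2)"
    and "(Kf*(Iim*Iif-Pm*Pf*w^2))*(M*w^4-a2*w^2+a0) + (Kf*w*(Pm*Iif+Pf*Iim))*(a1*w-a3*w^3) = Kf*(-Pm*Pf*M*w^6+c4*w^4+c2*w^2+c0)"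
  unfolding assms by algebra+

lemma rs_analytic:
  assumes "f analytic_on {z}"
  shows "remove_sings f z = f z" "\<not> is_pole (remove_sings f) z"
  using assms by (auto intro!: analytic_at_imp_no_pole remove_sings_analytic_on)

lemma den_analytic: "(\<lambda>s. sea_den Kf M B Bf Pm Iim Pf Iif alpha s) analytic_on A"
  unfolding sea_den_def Let_def by (intro analytic_intros)

lemma main_ineq:
  fixes Kf M Pm Pf b22 p q c4 c2 c0 a2 w R11 R12 c :: real
  assumes pos: "0 < Kf" "0 < M" "0 < Pm" "0 < Pf" "0 < b22"
  defines "C \<equiv> \<bar>c4\<bar> + \<bar>c2\<bar> + \<bar>c0\<bar>"
  defines "K \<equiv> C + 2*(\<bar>p\<bar>+\<bar>q\<bar>)/b22"
  assumes w: "w = 1 + \<bar>a2\<bar>/M + K/(Pm*Pf*M)"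
  assumes R11: "R11 = Kf*(p*w^4+q*w^2)"
    and R12: "R12 = Kf*(-Pm*Pf*M*w^6+c4*w^4+c2*w^2+c0)"
    and c: "\<bar>c\<bar> \<le> 1/b22"
  shows "2*R11*c + R12 < 0"
proof -
  have K0: "K \<ge> 0" unfolding K_def C_def using pos by auto
  have t1: "\<bar>a2\<bar>/M \<ge> 0" using pos by simp
  have t2: "K/(Pm*Pf*M) \<ge> 0" using pos K0 by simp
  have w1: "w \<ge> 1" using w t1 t2 by linarith
  have wK: "w > K/(Pm*Pf*M)" using w t1 t2 by linarith
  have w2: "w \<le> w^2" using w1 by (simp add: power2_eq_square)
  have w24: "w^2 \<le> w^4" using w1 by (simp add: power_increasing)
  have w04: "1 \<le> w^4" using w1 by simp
  have "K < Pm*Pf*M*w^2"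
  proof -
    have "K < Pm*Pf*M*w" using wK pos by (simp add: field_simps)
    also have "\<dots> \<le> Pm*Pf*M*w^2" using w2 pos by simp
    finally show ?thesis .
  qed
  have a: "\<bar>R11\<bar> \<le> Kf*((\<bar>p\<bar>+\<bar>q\<bar>)*w^4)"
  proof -
    have "\<bar>p*w^4+q*w^2\<bar> \<le> \<bar>p\<bar>*w^4+\<bar>q\<bar>*w^2"
      by (rule order_trans[OF abs_triangle_ineq]) (simp add: abs_mult)
    also have "\<dots> \<le> \<bar>p\<bar>*w^4+\<bar>q\<bar>*w^4" using w24 by (simp add: mult_left_mono)
    finally have X: "\<bar>p*w^4+q*w^2\<bar> \<le> (\<bar>p\<bar>+\<bar>q\<bar>)*w^4" by (simp add: algebra_simps)
    have "\<bar>R11\<bar> = Kf*\<bar>p*w^4+q*w^2\<bar>" using R11 pos by (simp add: abs_mult)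
    then show ?thesis using X pos by (simp add: mult_left_mono)
  qed
  have b: "2*R11*c \<le> 2*Kf*((\<bar>p\<bar>+\<bar>q\<bar>)*w^4)/b22"
  proof -
    have "2*R11*c \<le> 2*\<bar>R11\<bar>*\<bar>c\<bar>" by (simp add: abs_mult[symmetric] abs_ge_self)
    also have "\<dots> \<le> 2*(Kf*((\<bar>p\<bar>+\<bar>q\<bar>)*w^4))*(1/b22)"
      using a c by (intro mult_mono) auto
    finally show ?thesis by simp
  qed
  have d: "c4*w^4+c2*w^2+c0 \<le> C*w^4"
  proof -
    have "c4*w^4 \<le> \<bar>c4\<bar>*w^4" by (simp add: mult_right_mono)
    moreover have "c2*w^2 \<le> \<bar>c2\<bar>*w^4"
      using w24 by (meson abs_ge_self abs_ge_zero mult_mono order_trans zero_le_power2)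
    moreover have "c0 \<le> \<bar>c0\<bar>*w^4" using w04
      by (metis abs_ge_self abs_ge_zero mult_left_mono mult.right_neutral order_trans)
    ultimately show ?thesis unfolding C_def by (simp add: algebra_simps)
  qed
  have "2*R11*c + R12 \<le> Kf*w^4*(K - Pm*Pf*M*w^2)"
  proof -
    have "R12 \<le> Kf*(-Pm*Pf*M*w^6 + C*w^4)" using R12 d pos by simp
    then show ?thesis using b unfolding K_def
      by (simp add: algebra_simps eval_nat_numeral add_divide_distrib)
  qed
  also have "\<dots> < 0" using \<open>K < Pm*Pf*M*w^2\<close> pos w1
    by (simp add: mult_pos_neg)
  finally show ?thesis .
qed


theorem lemma7:
  fixes Kf M B Bf Pm Iim Pf Iif alpha k22 b22 :: real
  assumes "0 < Kf" "0 < M" "0 < B" "0 < Pm" "0 < Pf" "0 < k22" "0 < b22"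
    and "0 \<le> Iim" "0 \<le> Iif" "0 \<le> Bf" "0 \<le> alpha" "alpha \<le> 1"
  defines "h11 \<equiv> sea_h11 Kf M B Bf Pm Iim Pf Iif alpha"
    and "h12 \<equiv> sea_h12 Kf M B Bf Pm Iim Pf Iif alpha"
    and "h21 \<equiv> sea_h21"
    and "h22 \<equiv> sea_h22 b22 k22"
  assumes "no_rhp_poles [h11, h12, h21, h22]"
    and "imag_poles_simple_pos_res [h11, h12, h21, h22]"
    and "re_h11_nonneg [h11, h12, h21, h22] h11"
    and "absolutely_stable h11 h12 h21 h22"
  shows "0 < Bf"
proof (rule ccontr)
  assume "\<not> 0 < Bf"
  hence Bf0: "Bf = 0" using \<open>0 \<le> Bf\<close> by simp
  define a3 where "a3 = B+Pm"
  define a2 where "a2 = Iim+Kf*(alpha+Pm*Pf)"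
  define a1 where "a1 = Kf*(Pf*Iim+Pm*Iif)"
  define a0 where "a0 = Kf*Iim*Iif"
  define p where "p = (B+Pm)*a2-M*a1-Iim*a3"
  define q where "q = Iim*a1-(B+Pm)*a0"
  define c4 where "c4 = Pm*Pf*a2+Iim*Iif*M-(Pm*Iif+Pf*Iim)*a3"
  define c2 where "c2 = (Pm*Iif+Pf*Iim)*a1-Iim*Iif*a2-Pm*Pf*a0"
  define c0 where "c0 = Iim*Iif*a0"
  define C where "C = \<bar>c4\<bar> + \<bar>c2\<bar> + \<bar>c0\<bar>"
  define K where "K = C + 2*(\<bar>p\<bar>+\<bar>q\<bar>)/b22"
  define w where "w = 1 + \<bar>a2\<bar>/M + K/(Pm*Pf*M)"
  define s where "s = \<i> * complex_of_real w"
  define Dr where "Dr = M*w^4-(Iim+Kf*(alpha+Pm*Pf))*w^2+Kf*Iim*Iif"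
  define Di where "Di = Kf*(Pf*Iim+Pm*Iif)*w-(B+Pm)*w^3"
  define Er where "Er = -Kf*(B+Pm)*w^2"
  define Ei where "Ei = Kf*w*(Iim-M*w^2)"
  define Nr where "Nr = Kf*(Iim*Iif-Pm*Pf*w^2)"
  define Ni where "Ni = Kf*w*(Pm*Iif+Pf*Iim)"
  have pos: "0 < Kf" "0 < M" "0 < Pm" "0 < Pf" "0 < b22" using assms by auto
  have K0: "K \<ge> 0" unfolding K_def C_def using pos by auto
  have t1: "\<bar>a2\<bar>/M \<ge> 0" using pos by simp
  have t2: "K/(Pm*Pf*M) \<ge> 0" using pos K0 by simp
  have w1: "w \<ge> 1" using w_def t1 t2 by linarith
  have wa: "w > \<bar>a2\<bar>/M" using w_def t1 t2 by linarith
  have w2: "w \<le> w^2" using w1 by (simp add: power2_eq_square)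
  have Drpos: "Dr > 0"
  proof -
    have "a2 < M*w" using wa pos by (simp add: field_simps)
    also have "\<dots> \<le> M*w^2" using w2 pos by simp
    finally have "0 < w^2*(M*w^2 - a2)" using w1 by simp
    moreover have "a0 \<ge> 0" unfolding a0_def using assms by simp
    ultimately show ?thesis unfolding Dr_def a2_def a0_def by (simp add: algebra_simps eval_nat_numeral)
  qed
  have den: "sea_den Kf M B Bf Pm Iim Pf Iif alpha s = Complex Dr Di"
    unfolding Bf0 s_def Dr_def Di_def by (rule den_eq[OF pos(3,4)])
  have dnz: "sea_den Kf M B Bf Pm Iim Pf Iif alpha s \<noteq> 0"
    using den Drpos by (simp add: complex_eq_iff)
  define f11 where "f11 = (\<lambda>s.
     (of_real (Bf * M) * s^4 + of_real (Bf * (B + Pm) + Kf * M) * s^3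
       + of_real (Bf * Iim + Kf * (B + Pm)) * s^2 + of_real (Kf * Iim) * s)
     / sea_den Kf M B Bf Pm Iim Pf Iif alpha s)"
  define f12 where "f12 = (\<lambda>s.
     (let mu = Iim / Pm; nu = Iif / Pf in
       (of_real (Bf * Pm * Pf) * s^3 + of_real (Pm * Pf * (Kf + Bf * (mu + nu))) * s^2
         + of_real (Bf * Iim * Iif + Kf * Pm * Pf * (mu + nu)) * s + of_real (Kf * Iim * Iif))
       / sea_den Kf M B Bf Pm Iim Pf Iif alpha s))"
  define f22 where "f22 = (\<lambda>s::complex. s / (of_real b22 * s + of_real k22))"
  have h11e: "h11 = remove_sings f11" unfolding h11_def sea_h11_def f11_def ..
  have h12e: "h12 = remove_sings f12" unfolding h12_def sea_h12_def f12_def ..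
  have h22e: "h22 = remove_sings f22" unfolding h22_def sea_h22_def f22_def ..
  have an11: "f11 analytic_on {s}" unfolding f11_def
    by (rule analytic_on_divide[OF _ den_analytic]) (auto intro!: analytic_intros simp: dnz)
  have an12: "f12 analytic_on {s}" unfolding f12_def Let_def
    by (rule analytic_on_divide[OF _ den_analytic]) (auto intro!: analytic_intros simp: dnz)
  have d22: "of_real b22 * s + of_real k22 = Complex k22 (b22*w)"
    unfolding s_def by (simp add: complex_eq_iff)
  have d22nz: "of_real b22 * s + of_real k22 \<noteq> 0" unfolding d22 using assms(6) by (simp add: complex_eq_iff)
  have an22: "f22 analytic_on {s}" unfolding f22_def
    by (rule analytic_on_divide) (use d22nz in \<open>auto intro!: analytic_intros simp del: of_real_mult\<close>)
  have an21: "h21 analytic_on {s}" unfolding h21_def sea_h21_def by (intro analytic_intros)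
  have away: "away_from_imag_poles [h11, h12, h21, h22] w"
    unfolding away_from_imag_poles_def h11e h12e h22e s_def[symmetric]
    using rs_analytic(2)[OF an11] rs_analytic(2)[OF an12] rs_analytic(2)[OF an22]
      analytic_at_imp_no_pole[OF an21] by auto
  have stab: "0 \<le> 2 * Re (h11 s) * Re (h22 s) - Re (h12 s * h21 s) - cmod (h12 s * h21 s)"
    using assms(20) away unfolding absolutely_stable_def Let_def s_def by blast
  have v11: "h11 s = Complex Er Ei / Complex Dr Di"
    unfolding h11e rs_analytic(1)[OF an11] den[symmetric] unfolding f11_def
    unfolding Bf0 s_def Er_def Ei_def by (rule arg_cong2[where f="(/)"], rule n11_eq, rule refl)
  have v12: "h12 s = Complex Nr Ni / Complex Dr Di"
    unfolding h12e rs_analytic(1)[OF an12] den[symmetric] unfolding f12_def Let_def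
    unfolding Bf0 s_def Nr_def Ni_def by (rule arg_cong2[where f="(/)"], rule n12_eq[OF pos(3,4)], rule refl)
  define c where "c = Re (h22 s)"
  have c_eq: "c = b22*w^2/(k22^2+(b22*w)^2)"
    unfolding c_def h22e rs_analytic(1)[OF an22] unfolding f22_def d22
    by (simp add: s_def Re_divide cmod_power2 power2_eq_square)
  have cb: "\<bar>c\<bar> \<le> 1/b22"
  proof -
    have dpos: "k22^2+(b22*w)^2 > 0" using assms(6) by (simp add: add_pos_nonneg)
    have "b22*w^2*b22 \<le> k22^2+(b22*w)^2"
      proof -
        have "b22*w^2*b22 = (b22*w)^2" by (simp add: power2_eq_square)
        moreover have "0 \<le> k22^2" by simp
        ultimately show ?thesis by linarith
      qed
    hence "b22*w^2/(k22^2+(b22*w)^2) \<le> 1/b22" using dpos pos(5) by (simp add: field_simps)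
    moreover have "b22*w^2/(k22^2+(b22*w)^2) \<ge> 0" using dpos pos(5) by simp
    ultimately show ?thesis unfolding c_eq by simp
  qed
  define nD where "nD = (cmod (Complex Dr Di))^2"
  have nDpos: "nD > 0" unfolding nD_def using Drpos by (simp add: complex_eq_iff)
  have r11: "Re (h11 s) = (Er*Dr + Ei*Di)/nD" unfolding v11 nD_def by (simp add: Re_divide cmod_power2)
  have r12: "Re (h12 s) = (Nr*Dr + Ni*Di)/nD" unfolding v12 nD_def by (simp add: Re_divide cmod_power2)
  have "0 \<le> 2 * Re (h11 s) * c + Re (h12 s)"
    proof -
    have "cmod (h12 s) \<le> 2 * Re (h11 s) * c + Re (h12 s)"
      using stab unfolding c_def h21_def sea_h21_def by simp
    then show ?thesis using norm_ge_zero[of "h12 s"] by linarith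
  qed
  moreover have "2 * Re (h11 s) * c + Re (h12 s) = (2*(Er*Dr + Ei*Di)*c + (Nr*Dr + Ni*Di))/nD"
    unfolding r11 r12 using nDpos by (simp add: field_simps)
  ultimately have "0 \<le> (2*(Er*Dr + Ei*Di)*c + (Nr*Dr + Ni*Di))/nD" by simp
  hence ge: "0 \<le> 2*(Er*Dr + Ei*Di)*c + (Nr*Dr + Ni*Di)"
    using nDpos by (simp add: zero_le_divide_iff)
  have R11: "Er*Dr + Ei*Di = Kf*(p*w^4+q*w^2)"
    unfolding Er_def Ei_def Dr_def Di_def p_def q_def a3_def a2_def a1_def a0_def
    by (rule ids(1))
  have R12: "Nr*Dr + Ni*Di = Kf*(-Pm*Pf*M*w^6+c4*w^4+c2*w^2+c0)"
    unfolding Nr_def Ni_def Dr_def Di_def c4_def c2_def c0_def a3_def a2_def a1_def a0_def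
    by (rule ids(2))
  have "2*(Er*Dr + Ei*Di)*c + (Nr*Dr + Ni*Di) < 0"
    by (rule main_ineq[OF pos w_def[unfolded K_def C_def] R11 R12 cb])
  with ge show False by simp
qed

end
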